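(* In the setting below, the kernel of $\Phi$ contains the ideal $J_K$ of $\mathbb{Q}[X_{F,e},Y_k:F\in\mathcal{F}_K,k\in K]$ generated by the linear forms $\sum_{F\in\mathcal{F}_K}\langle u,\ell_F\rangle X_{F,e}+\sum_{k\in K}\langle u,\ell_{H_k}\rangle Y_k$ for all $u\in M$.
   Context: Setting: $R$ is a reduced crystallographic root system spanning an $n$-dimensional Euclidean space $V$, with simple system $S=\{\alpha_1,\dots,\alpha_n\}$ identified with $\{1,\dots,n\}$ and Weyl group $W$; $M$ is a lattice with $\mathbb{Z}R\subseteq M\subseteq\{x:2\langle x,\alpha\rangle/\langle\alpha,\alpha\rangle\in\mathbb{Z}\ \forall\alpha\in R\}$; $\Lambda\subset C_S\cap\mathbb{Q}M$ finite with $P=\operatorname{conv}(W(\Lambda))$ full-dimensional, simple (each vertex in exactly $n$ facets) and non-degenerate (no vertex on the boundary of $C_S$); $K\subseteq S$, $W_K$ generated by the reflections $r_k$ in $\alpha_k$, $k\in K$, $H_k$ the fixed hyperplane of $r_k$, $C_K=\{x:\langle x,\alpha_k\rangle\ge0\ \forall k\in K\}$. $\mathcal{F}_K$ is the set of facets of $P$ with barycenter in $C_K$, $W_F$ the stabilizer of $F$ in $W_K$, $\mathcal{F}=\{(F,s):F\in\mathcal{F}_K,s\in W_K/W_F\}$. For a facet $G$ of $P$, $\ell_G$ is its outward normal primitive in $M^\vee=\{y:\langle y,u\rangle\in\mathbb{Z}\ \forall u\in M\}$, and $\ell_{H_k}$ is the primitive outward normal of the facet $H_k\cap P$ of $P\cap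 C_K$. $H^*(X_P;\mathbb{Q})=\mathbb{Q}[X_{F,s}:(F,s)\in\mathcal{F}]/(I_P+J_P)$ for the toric variety $X_P$ of $P$ with respect to $M$, $I_P$ generated by $X_{F_1,s_1}\cdots X_{F_p,s_p}$ with $s_1(F_1)\cap\cdots\cap s_p(F_p)=\emptyset$, $J_P$ generated by $\sum_{(F,s)\in\mathcal{F}}\langle u,\ell_{s(F)}\rangle X_{F,s}$, $u\in M$. For $F\in\mathcal{F}_K$, $s\in W_K$ write $s(\ell_F)-\ell_F=\sum_{k\in K}C_{F,s,k}\ell_{H_k}$ with $C_{F,s,k}\in\mathbb{Q}$ (uniquely determined, depending only on $sW_F$). $\Phi:\mathbb{Q}[X_{F,e},Y_k]\to H^*(X_P;\mathbb{Q})$ is the ring homomorphism with $\Phi(X_{F,e})=\sum_{s\in W_K/W_F}X_{F,s}$, $\Phi(Y_k)=\sum_{(F,s)\in\mathcal{F}}C_{F,s,k}X_{F,s}$. *)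

theory Defs
  imports "HOL-Analysis.Analysis" "HOL-Library.Poly_Mapping"
begin

definition refl :: "'a::real_inner \<Rightarrow> 'a \<Rightarrow> 'a" where
  "refl a x = x - (2 * (x \<bullet> a) / (a \<bullet> a)) *\<^sub>R a"

definition reduced_crystallographic_root_system :: "'a::euclidean_space set \<Rightarrow> bool" where
  "reduced_crystallographic_root_system R \<longleftrightarrow>
     finite R \<and> 0 \<notin> R \<and> span R = UNIV \<and>
     (\<forall>a\<in>R. \<forall>b\<in>R. refl a b \<in> R) \<and>
     (\<forall>a\<in>R. \<forall>b\<in>R. 2 * (b \<bullet> a) / (a \<bullet> a) \<in> \<int>) \<and>
     (\<forall>a\<in>R. \<forall>c::real. c *\<^sub>R a \<in> R \<longrightarrow> c = 1 \<or> c = -1)"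

definition simple_system :: "'a::euclidean_space set \<Rightarrow> (nat \<Rightarrow> 'a) \<Rightarrow> bool" where
  "simple_system R \<alpha> \<longleftrightarrow>
     \<alpha> ` {1..DIM('a)} \<subseteq> R \<and> inj_on \<alpha> {1..DIM('a)} \<and> independent (\<alpha> ` {1..DIM('a)}) \<and>
     (\<forall>b\<in>R. \<exists>c::nat \<Rightarrow> int. b = (\<Sum>i=1..DIM('a). of_int (c i) *\<^sub>R \<alpha> i) \<and>
        ((\<forall>i\<in>{1..DIM('a)}. c i \<ge> 0) \<or> (\<forall>i\<in>{1..DIM('a)}. c i \<le> 0)))"

text \<open>Group (= monoid, since generated by involutions of a finite group) generated by maps.\<close>
inductive_set gen_group :: "('a \<Rightarrow> 'a) set \<Rightarrow> ('a \<Rightarrow> 'a) set" for G where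
  gen_id: "id \<in> gen_group G"
| gen_comp: "g \<in> G \<Longrightarrow> h \<in> gen_group G \<Longrightarrow> g \<circ> h \<in> gen_group G"

definition weyl_group :: "'a::real_inner set \<Rightarrow> ('a \<Rightarrow> 'a) set" where
  "weyl_group R = gen_group (refl ` R)"

definition parabolic :: "(nat \<Rightarrow> 'a::real_inner) \<Rightarrow> nat set \<Rightarrow> ('a \<Rightarrow> 'a) set" where
  "parabolic \<alpha> K = gen_group ((\<lambda>k. refl (\<alpha> k)) ` K)"

definition int_span :: "'a::real_vector set \<Rightarrow> 'a set" where
  "int_span R = {x. \<exists>c::'a \<Rightarrow> int. x = (\<Sum>b\<in>R. of_int (c b) *\<^sub>R b)}"

definition lattice_between :: "'a::real_inner set \<Rightarrow> 'a set \<Rightarrow> bool" where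
  "lattice_between R M \<longleftrightarrow>
     0 \<in> M \<and> (\<forall>x\<in>M. \<forall>y\<in>M. x + y \<in> M) \<and> (\<forall>x\<in>M. - x \<in> M) \<and>
     int_span R \<subseteq> M \<and> M \<subseteq> {x. \<forall>a\<in>R. 2 * (x \<bullet> a) / (a \<bullet> a) \<in> \<int>}"

definition dual_lattice :: "'a::real_inner set \<Rightarrow> 'a set" where
  "dual_lattice M = {y. \<forall>u\<in>M. y \<bullet> u \<in> \<int>}"

definition rat_span :: "'a::real_vector set \<Rightarrow> 'a set" where
  "rat_span M = {x. \<exists>N::int. N > 0 \<and> of_int N *\<^sub>R x \<in> M}"

definition chamber :: "(nat \<Rightarrow> 'a::real_inner) \<Rightarrow> nat set \<Rightarrow> 'a set" where
  "chamber \<alpha> K = {x. \<forall>k\<in>K. 0 \<le> x \<bullet> \<alpha> k}"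

definition polytope_of :: "'a::real_inner set \<Rightarrow> 'a set \<Rightarrow> 'a set" where
  "polytope_of R \<Lambda> = convex hull (\<Union>w\<in>weyl_group R. w ` \<Lambda>)"

definition vertices :: "'a::real_vector set \<Rightarrow> 'a set" where
  "vertices P = {v. v extreme_point_of P}"

definition simple_polytope :: "'a::euclidean_space set \<Rightarrow> bool" where
  "simple_polytope P \<longleftrightarrow> (\<forall>v\<in>vertices P. card {F. F facet_of P \<and> v \<in> F} = DIM('a))"

definition nondegenerate :: "(nat \<Rightarrow> 'a::euclidean_space) \<Rightarrow> 'a set \<Rightarrow> bool" where
  "nondegenerate \<alpha> P \<longleftrightarrow> (\<forall>v\<in>vertices P. v \<notin> frontier (chamber \<alpha> {1..DIM('a)}))"

definition barycenter :: "'a::real_vector set \<Rightarrow> 'a" where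
  "barycenter F = (1 / real (card (vertices F))) *\<^sub>R (\<Sum>v\<in>vertices F. v)"

definition facets_K :: "'a::euclidean_space set \<Rightarrow> (nat \<Rightarrow> 'a) \<Rightarrow> nat set \<Rightarrow> 'a set set" where
  "facets_K P \<alpha> K = {F. F facet_of P \<and> barycenter F \<in> chamber \<alpha> K}"

definition stabilizer :: "('a \<Rightarrow> 'a) set \<Rightarrow> 'a set \<Rightarrow> ('a \<Rightarrow> 'a) set" where
  "stabilizer W F = {w\<in>W. w ` F = F}"

definition left_cosets :: "('a \<Rightarrow> 'a) set \<Rightarrow> ('a \<Rightarrow> 'a) set \<Rightarrow> ('a \<Rightarrow> 'a) set set" where
  "left_cosets W H = {(\<lambda>h. s \<circ> h) ` H | s. s \<in> W}"

definition rep :: "('a \<Rightarrow> 'a) set \<Rightarrow> 'a \<Rightarrow> 'a" where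
  "rep \<sigma> = (SOME s. s \<in> \<sigma>)"

definition index_set ::
  "'a::euclidean_space set \<Rightarrow> (nat \<Rightarrow> 'a) \<Rightarrow> nat set \<Rightarrow> ('a set \<times> ('a \<Rightarrow> 'a) set) set" where
  "index_set P \<alpha> K = {(F, \<sigma>). F \<in> facets_K P \<alpha> K \<and>
       \<sigma> \<in> left_cosets (parabolic \<alpha> K) (stabilizer (parabolic \<alpha> K) F)}"

definition primitive :: "'a::real_inner set \<Rightarrow> 'a \<Rightarrow> bool" where
  "primitive M y \<longleftrightarrow> y \<in> dual_lattice M \<and> y \<noteq> 0 \<and>
     (\<forall>k::nat. \<forall>z\<in>dual_lattice M. y = of_nat k *\<^sub>R z \<longrightarrow> k = 1)"

definition facet_normal :: "'a::real_inner set \<Rightarrow> 'a set \<Rightarrow> 'a set \<Rightarrow> 'a" where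
  "facet_normal M P G = (THE y. primitive M y \<and>
      (\<exists>b. (\<forall>x\<in>P. y \<bullet> x \<le> b) \<and> G = {x\<in>P. y \<bullet> x = b}))"

text \<open>\<open>\<ell>_{H_k}\<close>: primitive outward normal of the facet \<open>H_k \<inter> P\<close> of \<open>P \<inter> C_K\<close>.\<close>
definition wall_normal :: "'a::real_inner set \<Rightarrow> (nat \<Rightarrow> 'a) \<Rightarrow> nat \<Rightarrow> 'a" where
  "wall_normal M \<alpha> k = (THE y. primitive M y \<and> (\<exists>c>0. y = - (c *\<^sub>R \<alpha> k)))"

definition C_coef ::
  "'a::euclidean_space set \<Rightarrow> 'a set \<Rightarrow> (nat \<Rightarrow> 'a) \<Rightarrow> nat set \<Rightarrow> 'a set \<Rightarrow> ('a \<Rightarrow> 'a) set \<Rightarrow> nat \<Rightarrow> rat" where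
  "C_coef M P \<alpha> K F \<sigma> k = (THE c :: nat \<Rightarrow> rat. (\<forall>j. j \<notin> K \<longrightarrow> c j = 0) \<and>
      rep \<sigma> (facet_normal M P F) - facet_normal M P F
        = (\<Sum>j\<in>K. of_rat (c j) *\<^sub>R wall_normal M \<alpha> j)) k"

definition to_rat :: "real \<Rightarrow> rat" where
  "to_rat x = (THE q. of_rat q = x)"

type_synonym 'v mpoly = "('v \<Rightarrow>\<^sub>0 nat) \<Rightarrow>\<^sub>0 rat"

definition Var :: "'v \<Rightarrow> 'v mpoly" where
  "Var v = Poly_Mapping.single (Poly_Mapping.single v 1) 1"

definition Const :: "rat \<Rightarrow> 'v mpoly" where
  "Const c = Poly_Mapping.single 0 c"

definition subst_hom :: "('v \<Rightarrow> 'w mpoly) \<Rightarrow> 'v mpoly \<Rightarrow> 'w mpoly" where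
  "subst_hom f p = (\<Sum>m\<in>Poly_Mapping.keys p. Const (Poly_Mapping.lookup p m) * (\<Prod>x\<in>Poly_Mapping.keys m. f x ^ Poly_Mapping.lookup m x))"

definition ideal_gen :: "'r::comm_ring_1 set \<Rightarrow> 'r set" where
  "ideal_gen G = {\<Sum>i<n. r i * g i | (n::nat) r g. \<forall>i<n. g i \<in> G}"

definition I_P_gens :: "'a::euclidean_space set \<Rightarrow> (nat \<Rightarrow> 'a) \<Rightarrow> nat set
    \<Rightarrow> ('a set \<times> ('a \<Rightarrow> 'a) set) mpoly set" where
  "I_P_gens P \<alpha> K = {prod_list (map Var xs) | xs. xs \<noteq> [] \<and> set xs \<subseteq> index_set P \<alpha> K \<and>
       (\<Inter>(F, \<sigma>)\<in>set xs. rep \<sigma> ` F) = {}}"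

definition J_P_gens :: "'a::euclidean_space set \<Rightarrow> 'a set \<Rightarrow> (nat \<Rightarrow> 'a) \<Rightarrow> nat set
    \<Rightarrow> ('a set \<times> ('a \<Rightarrow> 'a) set) mpoly set" where
  "J_P_gens M P \<alpha> K = {(\<Sum>(F, \<sigma>)\<in>index_set P \<alpha> K.
       Const (to_rat (u \<bullet> facet_normal M P (rep \<sigma> ` F))) * Var (F, \<sigma>)) | u. u \<in> M}"

definition Phi_img :: "'a::euclidean_space set \<Rightarrow> 'a set \<Rightarrow> (nat \<Rightarrow> 'a) \<Rightarrow> nat set
    \<Rightarrow> ('a set + nat) \<Rightarrow> ('a set \<times> ('a \<Rightarrow> 'a) set) mpoly" where
  "Phi_img M P \<alpha> K v = (case v of
      Inl F \<Rightarrow> (if F \<in> facets_K P \<alpha> K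
                then (\<Sum>\<sigma>\<in>left_cosets (parabolic \<alpha> K) (stabilizer (parabolic \<alpha> K) F). Var (F, \<sigma>))
                else 0)
    | Inr k \<Rightarrow> (if k \<in> K
                then (\<Sum>(G, \<sigma>)\<in>index_set P \<alpha> K. Const (C_coef M P \<alpha> K G \<sigma> k) * Var (G, \<sigma>))
                else 0))"

definition J_K_gens :: "'a::euclidean_space set \<Rightarrow> 'a set \<Rightarrow> (nat \<Rightarrow> 'a) \<Rightarrow> nat set
    \<Rightarrow> ('a set + nat) mpoly set" where
  "J_K_gens M P \<alpha> K = {(\<Sum>F\<in>facets_K P \<alpha> K. Const (to_rat (u \<bullet> facet_normal M P F)) * Var (Inl F))
        + (\<Sum>k\<in>K. Const (to_rat (u \<bullet> wall_normal M \<alpha> k)) * Var (Inr k)) | u. u \<in> M}"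

end

theory Submission
  imports Defs
begin

definition mon :: "('v \<Rightarrow> 'w mpoly) \<Rightarrow> ('v \<Rightarrow>\<^sub>0 nat) \<Rightarrow> 'w mpoly" where
  "mon f m = (\<Prod>x\<in>Poly_Mapping.keys m. f x ^ Poly_Mapping.lookup m x)"

lemma Const_0[simp]: "Const 0 = 0" by (simp add: Const_def)
lemma Const_1[simp]: "Const 1 = 1" by (simp add: Const_def)
lemma Const_add: "Const (a + b) = Const a + Const b" by (simp add: Const_def single_add)
lemma Const_mult: "Const (a * b) = Const a * Const b" by (simp add: Const_def mult_single)
lemma Const_sum: "Const (sum g A) = (\<Sum>x\<in>A. Const (g x))"
  by (induction A rule: infinite_finite_induct) (auto simp: Const_add)

lemma subst_hom_alt:
  assumes "finite A" "Poly_Mapping.keys p \<subseteq> A"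
  shows "subst_hom f p = (\<Sum>m\<in>A. Const (Poly_Mapping.lookup p m) * mon f m)"
  unfolding subst_hom_def mon_def
  by (rule sum.mono_neutral_left) (use assms in \<open>auto simp: in_keys_iff\<close>)

lemma mon_alt:
  assumes "finite A" "Poly_Mapping.keys m \<subseteq> A"
  shows "mon f m = (\<Prod>x\<in>A. f x ^ Poly_Mapping.lookup m x)"
  unfolding mon_def
  by (rule prod.mono_neutral_left) (use assms in \<open>auto simp: in_keys_iff\<close>)

lemma mon_add: "mon f (m1 + m2) = mon f m1 * mon f m2"
proof -
  let ?A = "Poly_Mapping.keys m1 \<union> Poly_Mapping.keys m2"
  have "mon f (m1 + m2) = (\<Prod>x\<in>?A. f x ^ Poly_Mapping.lookup (m1+m2) x)"
    by (rule mon_alt) (auto simp: keys_add)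
  also have "\<dots> = (\<Prod>x\<in>?A. f x ^ Poly_Mapping.lookup m1 x) * (\<Prod>x\<in>?A. f x ^ Poly_Mapping.lookup m2 x)"
    by (simp add: lookup_add power_add prod.distrib)
  also have "\<dots> = mon f m1 * mon f m2"
    by (simp add: mon_alt[symmetric])
  finally show ?thesis .
qed

lemma subst_add: "subst_hom f (p + q) = subst_hom f p + subst_hom f q"
proof -
  let ?A = "Poly_Mapping.keys p \<union> Poly_Mapping.keys q"
  have "subst_hom f (p + q) = (\<Sum>m\<in>?A. Const (Poly_Mapping.lookup (p+q) m) * mon f m)"
    by (rule subst_hom_alt) (auto simp: keys_add)
  also have "\<dots> = (\<Sum>m\<in>?A. Const (Poly_Mapping.lookup p m) * mon f m) + (\<Sum>m\<in>?A. Const (Poly_Mapping.lookup q m) * mon f m)"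
    by (simp add: lookup_add Const_add distrib_right sum.distrib)
  also have "\<dots> = subst_hom f p + subst_hom f q"
    by (simp add: subst_hom_alt[symmetric])
  finally show ?thesis .
qed

lemma subst_zero[simp]: "subst_hom f 0 = 0" by (simp add: subst_hom_def)

lemma subst_single: "subst_hom f (Poly_Mapping.single m c) = Const c * mon f m"
  by (subst subst_hom_alt[of "{m}"]) auto

lemma subst_sum: "subst_hom f (sum g A) = (\<Sum>x\<in>A. subst_hom f (g x))"
  by (induction A rule: infinite_finite_induct) (auto simp: subst_add)

lemma pm_induct:
  assumes "P 0" "\<And>p m c. P p \<Longrightarrow> P (p + Poly_Mapping.single m c)"
  shows "P (p :: 'a \<Rightarrow>\<^sub>0 'b::monoid_add)"
proof (induction p rule: update_induct)
  case const then show ?case using assms by simp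
next
  case (update f a b)
  have "Poly_Mapping.update a b f = f + Poly_Mapping.single a b"
    using update(1)
    by (intro poly_mapping_eqI) (auto simp: lookup_add lookup_single in_keys_iff when_def update.rep_eq)
  then show ?case using assms(2) update by simp
qed

lemma subst_mult: "subst_hom f (p * q) = subst_hom f p * subst_hom f q"
proof (induction p rule: pm_induct)
  case 1 then show ?case by simp
next
  case (2 p m c)
  have "subst_hom f (Poly_Mapping.single m c * q) = subst_hom f (Poly_Mapping.single m c) * subst_hom f q"
  proof (induction q rule: pm_induct)
    case 1 then show ?case by simp
  next
    case (2 q m' c')
    then show ?case
      by (simp add: distrib_left subst_add mult_single subst_single mon_add Const_mult ac_simps)
  qed
  then show ?case using 2 by (simp add: distrib_right subst_add)
qed

lemma subst_Var: "subst_hom f (Var v) = f v"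
  by (simp add: Var_def subst_single mon_def)

lemma subst_Const: "subst_hom f (Const c) = Const c"
  by (simp add: Const_def subst_single mon_def)

lemma refl_linear: "linear (refl a)"
proof (rule linearI)
  fix x y show "refl a (x + y) = refl a x + refl a y"
    unfolding refl_def by (simp add: inner_add_left add_divide_distrib distrib_left scaleR_add_left algebra_simps)
next
  fix c x show "refl a (c *\<^sub>R x) = c *\<^sub>R refl a x"
    unfolding refl_def by (simp add: scaleR_diff_right)
qed

lemma refl_selfadj: "refl a x \<bullet> y = x \<bullet> refl a y"
  unfolding refl_def by (simp add: inner_diff_left inner_diff_right inner_commute algebra_simps)

lemma refl_invol: assumes "a \<noteq> 0" shows "refl a (refl a x) = x"
proof -
  have aa: "a \<bullet> a \<noteq> 0" using assms by simp
  have 1: "refl a x \<bullet> a = - (x \<bullet> a)" unfolding refl_def using aa by (simp add: inner_diff_left)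
  have "refl a (refl a x) = refl a x + (2 * (x \<bullet> a) / (a \<bullet> a)) *\<^sub>R a"
    by (subst (1) refl_def) (simp add: 1)
  then show ?thesis by (simp add: refl_def)
qed

lemma refl_inner: assumes "a \<noteq> 0" shows "refl a x \<bullet> refl a y = x \<bullet> y"
  by (simp add: refl_selfadj refl_invol assms)

lemma gen_group_comp: "g \<in> gen_group G \<Longrightarrow> h \<in> gen_group G \<Longrightarrow> g \<circ> h \<in> gen_group G"
  by (induction g rule: gen_group.induct) (auto simp: comp_assoc intro: gen_group.intros)

lemma gen_group_gen: "g \<in> G \<Longrightarrow> g \<in> gen_group G"
  using gen_group.gen_comp[OF _ gen_group.gen_id] by fastforce

lemma gen_group_mono: assumes "G \<subseteq> H" shows "gen_group G \<subseteq> gen_group H"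
proof
  fix g assume "g \<in> gen_group G" then show "g \<in> gen_group H"
  proof induction
    case gen_id show ?case by (rule gen_group.gen_id)
  next
    case (gen_comp g h) then show ?case using assms by (intro gen_group.gen_comp) auto
  qed
qed

lemma gen_group_inv:
  assumes "\<And>g. g \<in> G \<Longrightarrow> g \<circ> g = id" "g \<in> gen_group G"
  shows "\<exists>h\<in>gen_group G. h \<circ> g = id \<and> g \<circ> h = id"
  using assms(2)
proof (induction g rule: gen_group.induct)
  case gen_id then show ?case by (rule bexI[of _ id]) (auto intro: gen_group.gen_id)
next
  case (gen_comp g h)
  then obtain h' where h': "h' \<in> gen_group G" "h' \<circ> h = id" "h \<circ> h' = id" by blast
  have "h' \<circ> g \<in> gen_group G" using gen_group_comp[OF h'(1) gen_group_gen[OF gen_comp(1)]] .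
  moreover have "(h' \<circ> g) \<circ> (g \<circ> h) = id"
    using assms(1)[OF gen_comp(1)] h' by (metis comp_assoc comp_id)
  moreover have "(g \<circ> h) \<circ> (h' \<circ> g) = id"
    using assms(1)[OF gen_comp(1)] h' by (metis comp_assoc comp_id)
  ultimately show ?case by blast
qed

lemma int_mult_closed:
  assumes "lattice_between R M" "x \<in> M" shows "of_int k *\<^sub>R x \<in> M"
proof -
  have nat: "of_nat m *\<^sub>R x \<in> M" for m
    by (induction m) (use assms in \<open>auto simp: lattice_between_def scaleR_add_left\<close>)
  show ?thesis
  proof (cases "k \<ge> 0")
    case True then show ?thesis using nat[of "nat k"] by simp
  next
    case False
    then have "of_int k *\<^sub>R x = - (of_nat (nat (-k)) *\<^sub>R x)" by simp
    then show ?thesis using nat[of "nat (-k)"] assms by (simp add: lattice_between_def)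
  qed
qed

lemma sum_closed_M:
  assumes "lattice_between R M" "\<And>i. i \<in> A \<Longrightarrow> f i \<in> M" shows "sum f A \<in> M"
  using assms(2) by (induction A rule: infinite_finite_induct) (use assms(1) in \<open>auto simp: lattice_between_def\<close>)

lemma R_sub_M:
  assumes "finite R" "lattice_between R M" "a \<in> R" shows "a \<in> M"
proof -
  have "(\<Sum>b\<in>R. of_int (if b = a then 1 else 0) *\<^sub>R b) = (\<Sum>b\<in>R. if b = a then b else 0)"
    by (rule sum.cong) auto
  also have "\<dots> = a" using assms by (simp add: sum.delta')
  finally have "a = (\<Sum>b\<in>R. of_int (if b = a then 1 else 0) *\<^sub>R b)" by simp
  then have "a \<in> int_span R" unfolding int_span_def mem_Collect_eq by (intro exI[where x="\<lambda>b. if b = a then 1 else 0"]) simp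
  then show ?thesis using assms(2) by (auto simp: lattice_between_def)
qed

lemma refl_M:
  assumes "finite R" "lattice_between R M" "a \<in> R" "x \<in> M" shows "refl a x \<in> M"
proof -
  have "2 * (x \<bullet> a) / (a \<bullet> a) \<in> \<int>" using assms by (auto simp: lattice_between_def)
  then obtain k where k: "2 * (x \<bullet> a) / (a \<bullet> a) = of_int k" by (auto elim: Ints_cases)
  have "of_int (-k) *\<^sub>R a \<in> M" using int_mult_closed R_sub_M assms by blast
  then have "x + of_int (-k) *\<^sub>R a \<in> M" using assms(2) assms(4) unfolding lattice_between_def by blast
  then show ?thesis unfolding refl_def k by simp
qed

lemma dual_int: "y \<in> dual_lattice M \<Longrightarrow> u \<in> M \<Longrightarrow> y \<bullet> u \<in> \<int>"
  by (simp add: dual_lattice_def)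

lemma dual_zero[simp]: "0 \<in> dual_lattice M" by (simp add: dual_lattice_def)

lemma dual_add: "y \<in> dual_lattice M \<Longrightarrow> z \<in> dual_lattice M \<Longrightarrow> y + z \<in> dual_lattice M"
  by (simp add: dual_lattice_def inner_add_left)

lemma dual_intmult: "y \<in> dual_lattice M \<Longrightarrow> of_int k *\<^sub>R y \<in> dual_lattice M"
  by (simp add: dual_lattice_def)

lemma dual_sum: "(\<And>i. i \<in> A \<Longrightarrow> f i \<in> dual_lattice M) \<Longrightarrow> sum f A \<in> dual_lattice M"
  by (induction A rule: infinite_finite_induct) (auto simp: dual_add)

lemma coroot_dual:
  assumes "lattice_between R M" "a \<in> R" shows "(2 / (a \<bullet> a)) *\<^sub>R a \<in> dual_lattice M"
  using assms unfolding dual_lattice_def lattice_between_def by (auto simp: inner_commute)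

locale WS =
  fixes R :: "'a::euclidean_space set" and \<alpha> :: "nat \<Rightarrow> 'a"
    and M \<Lambda> :: "'a set" and K :: "nat set"
  assumes rs: "reduced_crystallographic_root_system R"
    and ss: "simple_system R \<alpha>"
    and lat: "lattice_between R M"
    and finL: "finite \<Lambda>"
    and Lsub: "\<Lambda> \<subseteq> chamber \<alpha> {1..DIM('a)} \<inter> rat_span M"
    and full: "aff_dim (polytope_of R \<Lambda>) = int DIM('a)"
    and Ksub: "K \<subseteq> {1..DIM('a)}"
begin

abbreviation "W \<equiv> weyl_group R"
abbreviation "P \<equiv> polytope_of R \<Lambda>"
abbreviation "WK \<equiv> parabolic \<alpha> K"
abbreviation "S \<equiv> (\<Union>w\<in>W. w ` \<Lambda>)"
abbreviation "Md \<equiv> dual_lattice M"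

lemma finR: "finite R" and R0: "0 \<notin> R" and spanR: "span R = UNIV"
  and reflR: "a \<in> R \<Longrightarrow> b \<in> R \<Longrightarrow> refl a b \<in> R"
  using rs by (auto simp: reduced_crystallographic_root_system_def)

lemma alphaR: "i \<in> {1..DIM('a)} \<Longrightarrow> \<alpha> i \<in> R"
  using ss by (auto simp: simple_system_def)

lemma alpha_indep: "independent (\<alpha> ` {1..DIM('a)})" and alpha_inj: "inj_on \<alpha> {1..DIM('a)}"
  using ss by (auto simp: simple_system_def)

lemma alpha_nz: "i \<in> {1..DIM('a)} \<Longrightarrow> \<alpha> i \<noteq> 0"
  using alphaR R0 by force

lemma W_props:
  assumes "g \<in> W"
  shows "linear g \<and> (\<forall>x y. g x \<bullet> g y = x \<bullet> y) \<and> (\<forall>x\<in>R. g x \<in> R) \<and> (\<forall>x\<in>M. g x \<in> M)"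
  using assms unfolding weyl_group_def
proof induction
  case gen_id then show ?case using linear_id by (simp add: id_def)
next
  case (gen_comp g h)
  then obtain a where a: "a \<in> R" "g = refl a" by auto
  have a0: "a \<noteq> 0" using a R0 by auto
  have "linear (refl a \<circ> h)" using gen_comp.IH refl_linear by (intro linear_compose) auto
  then have "linear (\<lambda>x. refl a (h x))" by (simp add: o_def)
  then show ?case using gen_comp.IH a a0
    by (auto simp: refl_inner reflR refl_M[OF finR lat])
qed

lemma W_linear: "g \<in> W \<Longrightarrow> linear g" using W_props by blast
lemma W_inner: "g \<in> W \<Longrightarrow> g x \<bullet> g y = x \<bullet> y" using W_props by blast
lemma W_M: "g \<in> W \<Longrightarrow> x \<in> M \<Longrightarrow> g x \<in> M" using W_props by blast
lemma W_R: "g \<in> W \<Longrightarrow> x \<in> R \<Longrightarrow> g x \<in> R" using W_props by blast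

lemma W_comp: "g \<in> W \<Longrightarrow> h \<in> W \<Longrightarrow> g \<circ> h \<in> W"
  unfolding weyl_group_def by (rule gen_group_comp)

lemma W_id: "id \<in> W" unfolding weyl_group_def by (rule gen_group.gen_id)

lemma W_inv: assumes "g \<in> W" shows "\<exists>h\<in>W. h \<circ> g = id \<and> g \<circ> h = id"
  unfolding weyl_group_def
proof (rule gen_group_inv)
  fix r assume "r \<in> refl ` R"
  then obtain a where "a \<in> R" "r = refl a" by auto
  moreover have "a \<noteq> 0" using \<open>a \<in> R\<close> R0 by force
  ultimately show "r \<circ> r = id" using refl_invol by (auto simp: fun_eq_iff) 
qed (use assms weyl_group_def in auto)

lemma W_dual: assumes "g \<in> W" "y \<in> Md" shows "g y \<in> Md"
  unfolding dual_lattice_def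
proof
  obtain h where h: "h \<in> W" "h \<circ> g = id" "g \<circ> h = id" using W_inv assms by blast
  show "\<forall>u\<in>M. g y \<bullet> u \<in> \<int>"
  proof
    fix u assume u: "u \<in> M"
    have "g y \<bullet> u = g y \<bullet> g (h u)" using h(3) by (metis comp_apply id_apply)
    also have "\<dots> = y \<bullet> h u" using W_inner assms by blast
    finally show "g y \<bullet> u \<in> \<int>" using assms(2) W_M[OF h(1) u] by (simp add: dual_lattice_def)
  qed
qed

lemma W_finite: "finite W"
proof -
  have "inj_on (\<lambda>g. restrict g R) W"
  proof
    fix g h assume gh: "g \<in> W" "h \<in> W" "restrict g R = restrict h R"
    show "g = h"
    proof
      fix x
      have "x \<in> span R" using spanR by simp
      then show "g x = h x"
        using linear_eq_on_span[OF W_linear[OF gh(1)] W_linear[OF gh(2)]] gh(3)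
        by (metis restrict_apply')
    qed
  qed
  moreover have "(\<lambda>g. restrict g R) ` W \<subseteq> (\<Pi>\<^sub>E x\<in>R. R)" using W_R by auto
  moreover have "finite (\<Pi>\<^sub>E x\<in>R. R)" using finR by (simp add: finite_PiE)
  ultimately show ?thesis by (meson finite_imageD finite_subset)
qed

lemma S_finite: "finite S" using W_finite finL by blast

lemma W_S: "g \<in> W \<Longrightarrow> g ` S \<subseteq> S"
  using W_comp by (auto simp: image_comp[symmetric] image_iff) (metis comp_apply)

lemma P_def': "P = convex hull S" by (simp add: polytope_of_def)

lemma W_P: assumes "g \<in> W" shows "g ` P = P"
proof -
  have sub: "h ` P \<subseteq> P" if "h \<in> W" for h
  proof -
    have "h ` P = convex hull (h ` S)" unfolding P_def' using convex_hull_linear_image W_linear[OF that] by blast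
    also have "\<dots> \<subseteq> convex hull S" using W_S[OF that] by (rule hull_mono)
    finally show ?thesis unfolding P_def' .
  qed
  obtain h where h: "h \<in> W" "h \<circ> g = id" "g \<circ> h = id" using W_inv assms by blast
  have "P \<subseteq> g ` P"
  proof
    fix x assume "x \<in> P"
    then have "h x \<in> P" using sub[OF h(1)] by blast
    moreover have "x = g (h x)" using h(3) by (metis comp_apply id_apply)
    ultimately show "x \<in> g ` P" by blast
  qed
  then show ?thesis using sub[OF assms] by blast
qed

lemma rat_span_W: assumes "g \<in> W" "x \<in> rat_span M" shows "g x \<in> rat_span M"
proof -
  obtain N where N: "N > 0" "of_int N *\<^sub>R x \<in> M" using assms(2) by (auto simp: rat_span_def)
  have "g (of_int N *\<^sub>R x) = of_int N *\<^sub>R g x" using W_linear[OF assms(1)] by (simp add: linear_scale)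
  then show ?thesis using W_M[OF assms(1) N(2)] N(1) by (auto simp: rat_span_def)
qed

lemma S_rat: "S \<subseteq> rat_span M" using Lsub rat_span_W by auto

lemma WK_sub: "WK \<subseteq> W"
  unfolding parabolic_def weyl_group_def
  by (rule gen_group_mono) (use Ksub alphaR in auto)

lemma P_polytope: "polytope P" using P_def' S_finite polytope_convex_hull by simp

lemma facets_finite: "finite {F. F facet_of P}"
  by (rule finite_subset[OF _ finite_polytope_faces[OF P_polytope]]) (auto simp: facet_of_def)

end

lemma sum_skip:
  fixes f :: "nat \<Rightarrow> 'b::comm_monoid_add"
  assumes "p < n"
  shows "(\<Sum>k<n. f k) = f p + (\<Sum>i<n - 1. f (if i < p then i else Suc i))"
proof -
  let ?s = "\<lambda>i::nat. if i < p then i else Suc i"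
  have inj: "inj_on ?s {..<n - 1}" by (auto simp: inj_on_def split: if_splits)
  have eq: "{..<n} = insert p (?s ` {..<n - 1})"
  proof
    show "{..<n} \<subseteq> insert p (?s ` {..<n - 1})"
    proof
      fix k assume k: "k \<in> {..<n}"
      show "k \<in> insert p (?s ` {..<n - 1})"
      proof (cases "k < p")
        case True then have "k = ?s k" by simp
        moreover have "k < n - 1" using True assms by simp
        ultimately show ?thesis by blast
      next
        case False
        show ?thesis
        proof (cases "k = p")
          case False
          with \<open>\<not> k < p\<close> have "k = ?s (k - 1)" "k - 1 < n - 1" using k by auto
          then show ?thesis by blast
        qed simp
      qed
    qed
  qed (use assms in auto)
  have "p \<notin> ?s ` {..<n - 1}" by auto
  then have "(\<Sum>k<n. f k) = f p + sum f (?s ` {..<n - 1})" unfolding eq by simp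
  also have "sum f (?s ` {..<n - 1}) = (\<Sum>i<n - 1. f (?s i))" using sum.reindex[OF inj] by simp
  finally show ?thesis .
qed

lemma hom_kernel:
  fixes A :: "nat \<Rightarrow> nat \<Rightarrow> 'f::field"
  shows "m < n \<Longrightarrow> \<exists>x. (\<exists>i<n. x i \<noteq> 0) \<and> (\<forall>j<m. (\<Sum>i<n. A j i * x i) = 0)"
proof (induction m arbitrary: n A)
  case 0 then show ?case by (intro exI[of _ "\<lambda>_. 1"]) auto
next
  case (Suc m)
  show ?case
  proof (cases "\<forall>i<n. A m i = 0")
    case True
    obtain x where x: "\<exists>i<n. x i \<noteq> 0" "\<forall>j<m. (\<Sum>i<n. A j i * x i) = 0"
      using Suc.IH[of n A] Suc.prems by auto
    show ?thesis
    proof (rule exI[of _ x], intro conjI allI impI)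
      show "\<exists>i<n. x i \<noteq> 0" using x(1) .
    next
      fix j assume "j < Suc m"
      then show "(\<Sum>i<n. A j i * x i) = 0" using x True
        by (cases "j = m") auto
    qed
  next
    case False
    then obtain p where p: "p < n" "A m p \<noteq> 0" by auto
    let ?s = "\<lambda>i::nat. if i < p then i else Suc i"
    define B where "B j i = A j (?s i) - A j p * A m (?s i) / A m p" for j i
    obtain y where y: "\<exists>i<n - 1. y i \<noteq> 0" "\<forall>j<m. (\<Sum>i<n - 1. B j i * y i) = 0"
    proof -
      have "m < n - 1" using Suc.prems by simp
      from Suc.IH[OF this, of B] show ?thesis using that by blast
    qed
    define c where "c = - (\<Sum>i<n - 1. A m (?s i) * y i) / A m p"
    define x where "x k = (if k = p then c else if k < p then y k else y (k - 1))" for k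
    have xs: "x (?s i) = y i" for i by (auto simp: x_def)
    have xp: "x p = c" by (simp add: x_def)
    have split: "(\<Sum>k<n. A j k * x k) = A j p * c + (\<Sum>i<n - 1. A j (?s i) * y i)" for j
      using sum_skip[OF p(1), of "\<lambda>k. A j k * x k"] xp by (simp add: xs)
    show ?thesis
    proof (rule exI[of _ x], intro conjI allI impI)
      obtain i0 where "i0 < n - 1" "y i0 \<noteq> 0" using y by auto
      then have "?s i0 < n" "x (?s i0) \<noteq> 0" using xs by auto
      then show "\<exists>i<n. x i \<noteq> 0" by blast
    next
      fix j assume j: "j < Suc m"
      show "(\<Sum>k<n. A j k * x k) = 0"
      proof (cases "j = m")
        case True then show ?thesis using p(2) by (simp add: split c_def)
      next
        case False
        then have jm: "j < m" using j by simp
        have "(\<Sum>i<n - 1. A j (?s i) * y i) = (\<Sum>i<n - 1. B j i * y i) + A j p / A m p * (\<Sum>i<n - 1. A m (?s i) * y i)"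
          by (simp add: B_def sum_distrib_left sum.distrib[symmetric] algebra_simps)
        also have "\<dots> = - (A j p * c)" using y(2) jm p(2) by (simp add: c_def)
        finally show ?thesis by (simp add: split)
      qed
    qed
  qed
qed

context WS begin

lemma alphaM: "i \<in> {1..DIM('a)} \<Longrightarrow> \<alpha> i \<in> M"
  using R_sub_M[OF finR lat] alphaR by blast

lemma alpha_span: "span (\<alpha> ` {1..DIM('a)}) = UNIV"
proof -
  have "card (\<alpha> ` {1..DIM('a)}) = DIM('a)" using card_image[OF alpha_inj] by simp
  then have "dim (\<alpha> ` {1..DIM('a)}) = DIM('a)" using dim_eq_card_independent[OF alpha_indep] by simp
  then show ?thesis using dim_eq_full by auto
qed

lemma pair_nz: assumes "y \<noteq> 0" shows "\<exists>i\<in>{1..DIM('a)}. y \<bullet> \<alpha> i \<noteq> 0"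
proof (rule ccontr)
  assume "\<not> ?thesis"
  then have "\<alpha> ` {1..DIM('a)} \<subseteq> {x. y \<bullet> x = 0}" by auto
  then have "span (\<alpha> ` {1..DIM('a)}) \<subseteq> {x. y \<bullet> x = 0}"
    by (intro span_minimal) (auto simp: subspace_hyperplane)
  moreover have "y \<in> span (\<alpha> ` {1..DIM('a)})" by (metis UNIV_I alpha_span)
  ultimately have "y \<bullet> y = 0" by blast
  then show False using assms by simp
qed

lemma ratio_rat:
  assumes "y1 \<in> Md" "y2 \<in> Md" "y1 \<noteq> 0" "y2 = t *\<^sub>R y1"
  shows "t \<in> \<rat>"
proof -
  obtain i where i: "i \<in> {1..DIM('a)}" "y1 \<bullet> \<alpha> i \<noteq> 0" using pair_nz assms(3) by blast
  have a: "y1 \<bullet> \<alpha> i \<in> \<int>" "y2 \<bullet> \<alpha> i \<in> \<int>" using assms(1,2) alphaM[OF i(1)] by (auto simp: dual_lattice_def)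
  have e: "y2 \<bullet> \<alpha> i = t * (y1 \<bullet> \<alpha> i)" using assms(4) by simp
  have "t = (y2 \<bullet> \<alpha> i) / (y1 \<bullet> \<alpha> i)" unfolding e using i(2) by simp
  moreover have "(y2 \<bullet> \<alpha> i) / (y1 \<bullet> \<alpha> i) \<in> \<rat>"
    by (intro Rats_divide) (use a Ints_subset_Rats in auto)
  ultimately show ?thesis by simp
qed

lemma prim_unique:
  assumes "primitive M y1" "primitive M y2" "y2 = t *\<^sub>R y1" "t > 0"
  shows "y2 = y1"
proof -
  have y1: "y1 \<in> Md" "y1 \<noteq> 0" and y2: "y2 \<in> Md" "y2 \<noteq> 0" using assms by (auto simp: primitive_def)
  have "t \<in> \<rat>" using ratio_rat y1 y2 assms(3) by blast
  then obtain p q :: int where pq: "q > 0" "coprime p q" "t = of_int p / of_int q" by (rule Rats_cases')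
  have p0: "p > 0" using pq assms(4) by (simp add: zero_less_divide_iff)
  obtain u v where uv: "u * p + v * q = 1" using bezout_int[of p q] pq(2) by auto
  define z where "z = of_int u *\<^sub>R y2 + of_int v *\<^sub>R y1"
  have zM: "z \<in> Md" unfolding z_def using y1 y2 by (intro dual_add dual_intmult)
  have qy: "of_int q *\<^sub>R y2 = of_int p *\<^sub>R y1" using pq(1) by (simp add: assms(3) pq(3))
  have "of_int q *\<^sub>R z = of_int u *\<^sub>R (of_int q *\<^sub>R y2) + (of_int v * of_int q) *\<^sub>R y1"
    unfolding z_def by (simp add: scaleR_add_right mult.commute)
  also have "\<dots> = (of_int u * of_int p + of_int v * of_int q) *\<^sub>R y1" unfolding qy by (simp add: scaleR_add_left)
  also have "\<dots> = y1" using uv by (metis of_int_1 of_int_add of_int_mult scaleR_one)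
  finally have "y1 = of_nat (nat q) *\<^sub>R z" using pq(1) by simp
  then have "nat q = 1" using assms(1) zM by (auto simp: primitive_def)
  then have "q = 1" using pq(1) by simp
  then have yp: "y2 = of_nat (nat p) *\<^sub>R y1" using pq p0 assms(3) by simp
  then have "nat p = 1" using assms(2) y1 by (auto simp: primitive_def)
  then show ?thesis using yp by simp
qed

lemma prim_exists:
  assumes "y \<in> Md" "y \<noteq> 0"
  shows "\<exists>k z. k \<ge> 1 \<and> y = of_nat k *\<^sub>R z \<and> primitive M z"
proof -
  obtain i where i: "i \<in> {1..DIM('a)}" "y \<bullet> \<alpha> i \<noteq> 0" using pair_nz assms(2) by blast
  define Ks where "Ks = {k::nat. \<exists>z\<in>Md. y = of_nat k *\<^sub>R z}"
  have bound: "k \<le> \<bar>y \<bullet> \<alpha> i\<bar>" if kK: "k \<in> Ks" for k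
  proof -
    obtain z where z: "z \<in> Md" "y = of_nat k *\<^sub>R z" using kK unfolding Ks_def by blast
    have "z \<bullet> \<alpha> i \<in> \<int>" using z alphaM[OF i(1)] by (simp add: dual_lattice_def)
    moreover have "z \<bullet> \<alpha> i \<noteq> 0" using i(2) z(2) by simp
    ultimately have "\<bar>z \<bullet> \<alpha> i\<bar> \<ge> 1" by (metis Ints_nonzero_abs_ge1)
    then have "of_nat k * 1 \<le> of_nat k * \<bar>z \<bullet> \<alpha> i\<bar>" by (intro mult_left_mono) auto
    then show ?thesis using z(2) by (simp add: abs_mult)
  qed
  have fin: "finite Ks"
  proof (rule finite_subset)
    show "Ks \<subseteq> {..nat \<lceil>\<bar>y \<bullet> \<alpha> i\<bar>\<rceil>}"
    proof
      fix k assume "k \<in> Ks"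
      then have "real k \<le> \<bar>y \<bullet> \<alpha> i\<bar>" by (rule bound)
      also have "\<dots> \<le> of_int \<lceil>\<bar>y \<bullet> \<alpha> i\<bar>\<rceil>" by (rule le_of_int_ceiling)
      finally have "of_int (int k) \<le> (of_int \<lceil>\<bar>y \<bullet> \<alpha> i\<bar>\<rceil> :: real)" by simp
      then have "int k \<le> \<lceil>\<bar>y \<bullet> \<alpha> i\<bar>\<rceil>" by (simp only: of_int_le_iff)
      then show "k \<in> {..nat \<lceil>\<bar>y \<bullet> \<alpha> i\<bar>\<rceil>}" by simp
    qed
  qed simp
  have "1 \<in> Ks" using assms(1) Ks_def by auto
  define k where "k = Max Ks"
  have "k \<in> Ks" unfolding k_def using fin \<open>1 \<in> Ks\<close> Max_in by blast
  then obtain z where z: "z \<in> Md" "y = of_nat k *\<^sub>R z" using Ks_def by auto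
  have k1: "k \<ge> 1" unfolding k_def using fin \<open>1 \<in> Ks\<close> Max_ge by blast
  have z0: "z \<noteq> 0" using z assms(2) by auto
  have "primitive M z" unfolding primitive_def
  proof (intro conjI allI ballI impI)
    fix m :: nat and z' assume z': "z' \<in> Md" "z = of_nat m *\<^sub>R z'"
    then have "k * m \<in> Ks" using z Ks_def by auto
    then have "k * m \<le> k" unfolding k_def using fin Max_ge by blast
    moreover have "m \<noteq> 0" using z' z0 by auto
    moreover have "k * m \<le> k * 1" using \<open>k * m \<le> k\<close> by simp
    then have "m \<le> 1" using k1 by simp
    ultimately show "m = 1" by simp
  qed (use z z0 in auto)
  then show ?thesis using k1 z by blast
qed

lemma coroot_dual': "i \<in> {1..DIM('a)} \<Longrightarrow> (2 / (\<alpha> i \<bullet> \<alpha> i)) *\<^sub>R \<alpha> i \<in> Md"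
  using coroot_dual[OF lat alphaR] by blast

lemma wall_ex1:
  assumes "k \<in> {1..DIM('a)}"
  shows "\<exists>!y. primitive M y \<and> (\<exists>c>0. y = - (c *\<^sub>R \<alpha> k))"
proof -
  let ?b = "\<alpha> k"
  have b0: "?b \<noteq> 0" using alpha_nz assms by blast
  have bb: "?b \<bullet> ?b > 0" using b0 by simp
  define y0 where "y0 = of_int (-1) *\<^sub>R ((2 / (?b \<bullet> ?b)) *\<^sub>R ?b)"
  have "y0 \<in> Md" unfolding y0_def by (rule dual_intmult[OF coroot_dual'[OF assms]])
  moreover have "y0 \<noteq> 0" using b0 bb by (simp add: y0_def)
  ultimately obtain m z where mz: "m \<ge> 1" "y0 = of_nat m *\<^sub>R z" "primitive M z" using prim_exists by blast
  have "z = (1 / real m) *\<^sub>R y0" using mz(1,2) by simp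
  then have "z = - ((2 / (?b \<bullet> ?b) / of_nat m) *\<^sub>R ?b)" unfolding y0_def by simp
  moreover have "2 / (?b \<bullet> ?b) / of_nat m > 0" using bb mz(1) by simp
  ultimately have ex: "primitive M z \<and> (\<exists>c>0. z = - (c *\<^sub>R ?b))" using mz(3) by blast
  show ?thesis
  proof (rule ex1I[of _ z])
    fix y assume y: "primitive M y \<and> (\<exists>c>0. y = - (c *\<^sub>R ?b))"
    obtain c1 where c1: "c1 > 0" "z = - (c1 *\<^sub>R ?b)" using ex by blast
    obtain c2 where c2: "c2 > 0" "y = - (c2 *\<^sub>R ?b)" using y by blast
    have "y = (c2 / c1) *\<^sub>R z" using c1 c2 by simp
    then show "y = z" using prim_unique[of z y "c2/c1"] ex y c1 c2 by simp
  qed (rule ex)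
qed

lemma wall_props:
  assumes "k \<in> {1..DIM('a)}"
  shows "primitive M (wall_normal M \<alpha> k) \<and> (\<exists>c>0. wall_normal M \<alpha> k = - (c *\<^sub>R \<alpha> k))"
  unfolding wall_normal_def using theI'[OF wall_ex1[OF assms]] .

end

context WS begin

lemma finK: "finite K" using Ksub finite_subset by blast

lemma WK_coef:
  assumes "g \<in> WK" "y \<in> Md"
  shows "\<exists>c::nat \<Rightarrow> rat. (\<forall>j. j \<notin> K \<longrightarrow> c j = 0) \<and>
           g y - y = (\<Sum>j\<in>K. of_rat (c j) *\<^sub>R wall_normal M \<alpha> j)"
  using assms(1) unfolding parabolic_def
proof induction
  case gen_id then show ?case by (intro exI[of _ "\<lambda>_. 0"]) simp
next
  case (gen_comp g h)
  obtain k where k: "k \<in> K" "g = refl (\<alpha> k)" using gen_comp.hyps(1) by auto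
  obtain c where c: "\<forall>j. j \<notin> K \<longrightarrow> c j = 0" "h y - y = (\<Sum>j\<in>K. of_rat (c j) *\<^sub>R wall_normal M \<alpha> j)"
    using gen_comp.IH by blast
  have hW: "h \<in> W" using gen_comp.hyps(2) WK_sub unfolding parabolic_def by blast
  define z where "z = h y"
  have zM: "z \<in> Md" unfolding z_def using W_dual[OF hW assms(2)] .
  let ?b = "\<alpha> k" let ?l = "wall_normal M \<alpha> k"
  have kn: "k \<in> {1..DIM('a)}" using k Ksub by blast
  obtain c0 where c0: "c0 > 0" "?l = - (c0 *\<^sub>R ?b)" and lprim: "primitive M ?l" using wall_props[OF kn] by blast
  have b0: "?b \<noteq> 0" using alpha_nz kn by blast
  have bb: "?b \<bullet> ?b > 0" using b0 by simp
  define t where "t = (2 / (?b \<bullet> ?b)) / c0"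
  have ncr: "of_int (-1) *\<^sub>R ((2 / (?b \<bullet> ?b)) *\<^sub>R ?b) \<in> Md" by (rule dual_intmult[OF coroot_dual'[OF kn]])
  have "of_int (-1) *\<^sub>R ((2 / (?b \<bullet> ?b)) *\<^sub>R ?b) = t *\<^sub>R ?l" using c0 by (simp add: t_def)
  then have tQ: "t \<in> \<rat>" using ratio_rat[of ?l _ t] ncr lprim by (auto simp: primitive_def)
  have zb: "z \<bullet> ?b \<in> \<int>" using zM alphaM[OF kn] by (simp add: dual_lattice_def)
  have "(z \<bullet> ?b) * t \<in> \<rat>" using zb tQ Ints_subset_Rats by (intro Rats_mult) auto
  then obtain q where q: "(z \<bullet> ?b) * t = of_rat q" by (auto elim: Rats_cases)
  have rz: "refl ?b z - z = of_rat q *\<^sub>R ?l"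
    unfolding refl_def q[symmetric] using c0 by (simp add: t_def)
  define c' where "c' j = c j + (if j = k then q else 0)" for j
  have "(\<Sum>j\<in>K. of_rat (c' j) *\<^sub>R wall_normal M \<alpha> j)
      = (\<Sum>j\<in>K. of_rat (c j) *\<^sub>R wall_normal M \<alpha> j + (if j = k then of_rat q *\<^sub>R ?l else 0))"
    by (rule sum.cong) (simp_all add: c'_def of_rat_add scaleR_add_left)
  also have "\<dots> = (\<Sum>j\<in>K. of_rat (c j) *\<^sub>R wall_normal M \<alpha> j) + (\<Sum>j\<in>K. (if j = k then of_rat q *\<^sub>R ?l else 0))"
    by (rule sum.distrib)
  also have "\<dots> = (h y - y) + of_rat q *\<^sub>R ?l" using c(2) k(1) finK by (simp only: sum.delta if_True)
  also have "\<dots> = (g \<circ> h) y - y"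
  proof -
    have gz: "(g \<circ> h) y = of_rat q *\<^sub>R ?l + z" using rz k(2) unfolding z_def comp_def by (metis diff_add_cancel)
    show ?thesis unfolding gz z_def by simp
  qed
  finally show ?case using c(1) k(1) by (intro exI[of _ c']) (auto simp: c'_def)
qed

lemma wall_coef: "\<exists>cw. \<forall>j\<in>{1..DIM('a)}. cw j > 0 \<and> wall_normal M \<alpha> j = - (cw j *\<^sub>R \<alpha> j)"
  using wall_props by metis

lemma coef_unique:
  assumes "\<forall>j. j \<notin> K \<longrightarrow> c j = 0" "\<forall>j. j \<notin> K \<longrightarrow> c' j = 0"
    and "(\<Sum>j\<in>K. of_rat (c j) *\<^sub>R wall_normal M \<alpha> j) = (\<Sum>j\<in>K. of_rat (c' j) *\<^sub>R wall_normal M \<alpha> j)"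
  shows "c = c'"
proof
  fix j0
  obtain cw where cw: "\<forall>j\<in>{1..DIM('a)}. cw j > 0 \<and> wall_normal M \<alpha> j = - (cw j *\<^sub>R \<alpha> j)" using wall_coef by blast
  define d where "d j = (of_rat (c j) - of_rat (c' j)) * cw j" for j
  have "(\<Sum>j\<in>K. d j *\<^sub>R \<alpha> j) = (\<Sum>j\<in>K. of_rat (c' j) *\<^sub>R wall_normal M \<alpha> j) - (\<Sum>j\<in>K. of_rat (c j) *\<^sub>R wall_normal M \<alpha> j)"
    unfolding sum_subtractf[symmetric]
  proof (rule sum.cong)
    fix j assume "j \<in> K"
    then have "wall_normal M \<alpha> j = - (cw j *\<^sub>R \<alpha> j)" using cw Ksub by blast
    then show "d j *\<^sub>R \<alpha> j = of_rat (c' j) *\<^sub>R wall_normal M \<alpha> j - of_rat (c j) *\<^sub>R wall_normal M \<alpha> j"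
      by (simp add: d_def left_diff_distrib scaleR_diff_left)
  qed simp
  then have s0: "(\<Sum>j\<in>K. d j *\<^sub>R \<alpha> j) = 0" using assms(3) by simp
  have injK: "inj_on \<alpha> K" using alpha_inj Ksub inj_on_subset by blast
  have indK: "independent (\<alpha> ` K)" using independent_mono[OF alpha_indep image_mono[OF Ksub]] .
  have H: "\<forall>v\<in>\<alpha> ` K. e v = 0" if "(\<Sum>v\<in>\<alpha> ` K. e v *\<^sub>R v) = 0" for e
    using indK that unfolding independent_explicit by blast
  define u where "u v = d (inv_into K \<alpha> v)" for v
  have "(\<Sum>v\<in>\<alpha> ` K. u v *\<^sub>R v) = (\<Sum>j\<in>K. u (\<alpha> j) *\<^sub>R \<alpha> j)" using sum.reindex[OF injK] by simp
  also have "\<dots> = (\<Sum>j\<in>K. d j *\<^sub>R \<alpha> j)" using injK by (intro sum.cong) (auto simp: u_def)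
  finally have "(\<Sum>v\<in>\<alpha> ` K. u v *\<^sub>R v) = 0" using s0 by simp
  then have uz: "\<forall>v\<in>\<alpha> ` K. u v = 0" by (rule H)
  show "c j0 = c' j0"
  proof (cases "j0 \<in> K")
    case True
    then have "d j0 = 0" using uz injK by (auto simp: u_def)
    moreover have "cw j0 > 0" using cw True Ksub by blast
    ultimately show ?thesis by (simp add: d_def)
  qed (use assms in auto)
qed

lemma C_coef_prop:
  assumes "rep \<sigma> \<in> WK" "facet_normal M P F \<in> Md"
  shows "(\<forall>j. j \<notin> K \<longrightarrow> C_coef M P \<alpha> K F \<sigma> j = 0) \<and>
         rep \<sigma> (facet_normal M P F) - facet_normal M P F
           = (\<Sum>j\<in>K. of_rat (C_coef M P \<alpha> K F \<sigma> j) *\<^sub>R wall_normal M \<alpha> j)"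
proof -
  let ?Q = "\<lambda>c::nat \<Rightarrow> rat. (\<forall>j. j \<notin> K \<longrightarrow> c j = 0) \<and>
      rep \<sigma> (facet_normal M P F) - facet_normal M P F = (\<Sum>j\<in>K. of_rat (c j) *\<^sub>R wall_normal M \<alpha> j)"
  have ex1: "\<exists>!c. ?Q c"
  proof -
    obtain c where "?Q c" using WK_coef[OF assms] by blast
    moreover have "c' = c" if "?Q c'" for c' using coef_unique[of c' c] that \<open>?Q c\<close> by simp
    ultimately show ?thesis by blast
  qed
  have eq: "C_coef M P \<alpha> K F \<sigma> = (THE c. ?Q c)" by (rule ext) (simp add: C_coef_def)
  show ?thesis unfolding eq using theI'[OF ex1] .
qed

end

definition isnormal :: "'a::real_inner set \<Rightarrow> 'a set \<Rightarrow> 'a set \<Rightarrow> 'a \<Rightarrow> bool" where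
  "isnormal M P G y \<longleftrightarrow> primitive M y \<and> (\<exists>b. (\<forall>x\<in>P. y \<bullet> x \<le> b) \<and> G = {x\<in>P. y \<bullet> x = b})"

lemma facet_normal_alt: "facet_normal M P G = (THE y. isnormal M P G y)"
  by (simp add: facet_normal_def isnormal_def)

lemma to_rat_of: "r \<in> \<rat> \<Longrightarrow> of_rat (to_rat r) = r"
  by (auto elim!: Rats_cases simp: to_rat_def)

lemma to_rat_of_rat[simp]: "to_rat (of_rat q) = q"
  by (simp add: to_rat_def)

lemma common_denom:
  fixes v :: "nat \<Rightarrow> rat"
  shows "\<exists>N::int. N > 0 \<and> (\<forall>i<n. \<exists>z::int. of_int N * v i = of_int z)"
proof (induction n)
  case 0 then show ?case by (intro exI[of _ 1]) auto
next
  case (Suc n)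
  then obtain N where N: "N > 0" "\<forall>i<n. \<exists>z::int. of_int N * v i = of_int z" by blast
  obtain p q where pq: "quotient_of (v n) = (p, q)" by (cases "quotient_of (v n)")
  have q: "q > 0" using quotient_of_denom_pos[OF pq] .
  have vn: "v n = of_int p / of_int q" using quotient_of_div[OF pq] .
  show ?case
  proof (rule exI[of _ "N * q"], intro conjI allI impI)
    show "N * q > 0" using N q by simp
  next
    fix i assume "i < Suc n"
    show "\<exists>z::int. of_int (N * q) * v i = of_int z"
    proof (cases "i = n")
      case True
      then have "of_int (N * q) * v i = of_int (N * p)" using q by (simp add: vn)
      then show ?thesis by blast
    next
      case False
      then have "i < n" using \<open>i < Suc n\<close> by simp
      then obtain z where "of_int N * v i = of_int z" using N(2) by blast
      then have "of_int (N * q) * v i = of_int (q * z)" by (simp add: algebra_simps)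
      then show ?thesis by blast
    qed
  qed
qed

lemma L_par:
  fixes a y :: "'a::euclidean_space"
  assumes "a \<noteq> 0" "{x. a \<bullet> x = 0} \<subseteq> {x. y \<bullet> x = 0}"
  shows "y = (y \<bullet> a / (a \<bullet> a)) *\<^sub>R a"
proof -
  define z where "z = y - (y \<bullet> a / (a \<bullet> a)) *\<^sub>R a"
  have "a \<bullet> z = 0" using assms(1) by (simp add: z_def inner_diff_right inner_commute)
  then have yz: "y \<bullet> z = 0" using assms(2) by blast
  have "z \<bullet> z = y \<bullet> z - (y \<bullet> a / (a \<bullet> a)) * (a \<bullet> z)" by (simp add: z_def inner_diff_left)
  then have "z \<bullet> z = 0" using yz \<open>a \<bullet> z = 0\<close> by simp
  then show ?thesis by (simp add: z_def)
qed

lemma L_hyp: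
  fixes a :: "'a::euclidean_space"
  assumes "a \<noteq> 0" "T \<subseteq> {x. a \<bullet> x = 0}" "dim T = DIM('a) - 1"
  shows "{x. a \<bullet> x = 0} \<subseteq> span T"
proof -
  have "span T \<subseteq> {x. a \<bullet> x = 0}" using assms(2) subspace_hyperplane by (rule span_minimal)
  moreover have "dim {x. a \<bullet> x = 0} \<le> dim (span T)" using dim_hyperplane[OF assms(1)] assms(3) by simp
  ultimately have "span T = {x. a \<bullet> x = 0}"
    using subspace_dim_equal[OF subspace_span subspace_hyperplane] by blast
  then show ?thesis by simp
qed

context WS begin

lemma facet_facts:
  assumes "F facet_of P"
  shows "aff_dim F = int DIM('a) - 1" "F \<noteq> {}" "F \<subseteq> P" "F \<noteq> P" "F face_of P"
proof -
  have f: "F face_of P" "F \<noteq> {}" "aff_dim F = aff_dim P - 1" using assms unfolding facet_of_def by blast+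
  show "aff_dim F = int DIM('a) - 1" using f(3) full by simp
  show "F \<noteq> {}" "F face_of P" using f by blast+
  show "F \<subseteq> P" using face_of_imp_subset[OF f(1)] .
  show "F \<noteq> P" using f(3) by auto
qed

lemma facet_dim:
  assumes "F facet_of P" "x0 \<in> F"
  shows "dim ((\<lambda>x. x - x0) ` F) = DIM('a) - 1"
proof -
  have "x0 \<in> affine hull F" by (rule hull_inc[OF assms(2)])
  then have a: "aff_dim F = int (dim ((\<lambda>x. x - x0) ` F))" by (rule aff_dim_eq_dim_subtract)
  have b: "aff_dim F = int DIM('a) - 1" by (rule facet_facts(1)[OF assms(1)])
  have "int (dim ((\<lambda>x. x - x0) ` F)) = int DIM('a) - 1" using a b by (simp only:)
  then show ?thesis by linarith
qed

lemma norm_unique: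
  assumes "F facet_of P" "isnormal M P F y1" "isnormal M P F y2"
  shows "y1 = y2"
proof -
  obtain b1 where b1: "\<forall>x\<in>P. y1 \<bullet> x \<le> b1" "F = {x\<in>P. y1 \<bullet> x = b1}" and p1: "primitive M y1"
    using assms(2) by (auto simp: isnormal_def)
  obtain b2 where b2: "\<forall>x\<in>P. y2 \<bullet> x \<le> b2" "F = {x\<in>P. y2 \<bullet> x = b2}" and p2: "primitive M y2"
    using assms(3) by (auto simp: isnormal_def)
  have y10: "y1 \<noteq> 0" and y20: "y2 \<noteq> 0" using p1 p2 by (auto simp: primitive_def)
  obtain x0 where x0: "x0 \<in> F" using facet_facts(2)[OF assms(1)] by blast
  let ?T = "(\<lambda>x. x - x0) ` F"
  have T1: "?T \<subseteq> {x. y1 \<bullet> x = 0}" using b1(2) x0 by (auto simp: inner_diff_right)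
  have T2: "?T \<subseteq> {x. y2 \<bullet> x = 0}" using b2(2) x0 by (auto simp: inner_diff_right)
  have "{x. y1 \<bullet> x = 0} \<subseteq> span ?T" using L_hyp[OF y10 T1 facet_dim[OF assms(1) x0]] .
  also have "span ?T \<subseteq> {x. y2 \<bullet> x = 0}" using T2 by (intro span_minimal) (auto simp: subspace_hyperplane)
  finally have "y2 = (y2 \<bullet> y1 / (y1 \<bullet> y1)) *\<^sub>R y1" by (rule L_par[OF y10])
  then obtain s where s: "y2 = s *\<^sub>R y1" by blast
  have "s \<noteq> 0" using s y20 by auto
  obtain x where x: "x \<in> P" "x \<notin> F" using facet_facts(3,4)[OF assms(1)] by blast
  have "y1 \<bullet> x < b1" using x b1 by force
  have "b2 = s * b1" using x0 b1(2) b2(2) s by auto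
  moreover have "y2 \<bullet> x \<le> b2" using b2(1) x(1) by blast
  ultimately have "s * (y1 \<bullet> x) \<le> s * b1" using s by simp
  then have "s \<ge> 0" using \<open>y1 \<bullet> x < b1\<close> by (smt (verit) mult_less_cancel_left)
  then have "s > 0" using \<open>s \<noteq> 0\<close> by simp
  then show ?thesis using prim_unique[OF p1 p2 s] by simp
qed


lemma alpha_comb_zero:
  assumes "J \<subseteq> {1..DIM('a)}" "(\<Sum>j\<in>J. d j *\<^sub>R \<alpha> j) = 0"
  shows "\<forall>j\<in>J. d j = 0"
proof -
  have injK: "inj_on \<alpha> J" using alpha_inj assms(1) inj_on_subset by blast
  have indK: "independent (\<alpha> ` J)" using independent_mono[OF alpha_indep image_mono[OF assms(1)]] .
  have H: "\<forall>v\<in>\<alpha> ` J. e v = 0" if "(\<Sum>v\<in>\<alpha> ` J. e v *\<^sub>R v) = 0" for e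
    using indK that unfolding independent_explicit by blast
  define u where "u v = d (inv_into J \<alpha> v)" for v
  have "(\<Sum>v\<in>\<alpha> ` J. u v *\<^sub>R v) = (\<Sum>j\<in>J. u (\<alpha> j) *\<^sub>R \<alpha> j)" using sum.reindex[OF injK] by simp
  also have "\<dots> = (\<Sum>j\<in>J. d j *\<^sub>R \<alpha> j)" using injK by (intro sum.cong) (auto simp: u_def)
  finally have "(\<Sum>v\<in>\<alpha> ` J. u v *\<^sub>R v) = 0" using assms(2) by simp
  then have uz: "\<forall>v\<in>\<alpha> ` J. u v = 0" by (rule H)
  show ?thesis
  proof
    fix j assume "j \<in> J"
    then have "u (\<alpha> j) = 0" using uz by blast
    then show "d j = 0" using injK \<open>j \<in> J\<close> by (simp add: u_def)
  qed
qed

lemma rat_pair: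
  assumes "x \<in> rat_span M" "y \<in> Md" shows "y \<bullet> x \<in> \<rat>"
proof -
  obtain N where N: "N > 0" "of_int N *\<^sub>R x \<in> M" using assms(1) by (auto simp: rat_span_def)
  have i: "y \<bullet> (of_int N *\<^sub>R x) \<in> \<int>" using assms(2) N(2) unfolding dual_lattice_def by blast
  have "y \<bullet> x = (y \<bullet> (of_int N *\<^sub>R x)) / of_int N" using N(1) by simp
  moreover have "(y \<bullet> (of_int N *\<^sub>R x)) / of_int N \<in> \<rat>"
    by (intro Rats_divide) (use i Ints_subset_Rats in auto)
  ultimately show ?thesis by simp
qed

lemma exposed_rep:
  assumes "F facet_of P"
  obtains a b where "a \<noteq> 0" "P \<subseteq> {x. a \<bullet> x \<le> b}" "F = P \<inter> {x. a \<bullet> x = b}"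
proof -
  have "F exposed_face_of P"
    using exposed_face_of_polyhedron[OF polytope_imp_polyhedron[OF P_polytope]] facet_facts(5)[OF assms] by blast
  then obtain a b where ab: "P \<subseteq> {x. a \<bullet> x \<le> b}" "F = P \<inter> {x. a \<bullet> x = b}"
    unfolding exposed_face_of_def by blast
  have "a \<noteq> 0"
  proof
    assume a0: "a = 0"
    show False
    proof (cases "b = 0")
      case True then have "F = P" using ab(2) a0 by auto
      then show False using facet_facts(4)[OF assms] by blast
    next
      case False then have "F = {}" using ab(2) a0 by auto
      then show False using facet_facts(2)[OF assms] by blast
    qed
  qed
  then show ?thesis using ab that by blast
qed

lemma norm_exists:
  assumes fF: "F facet_of P"
  shows "\<exists>y. isnormal M P F y"
proof -
  let ?n = "DIM('a)"
  obtain a b where a0: "a \<noteq> 0" and ab: "P \<subseteq> {x. a \<bullet> x \<le> b}" "F = P \<inter> {x. a \<bullet> x = b}"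
    using exposed_rep[OF fF] by blast
  obtain S' where S': "S' \<subseteq> S" "F = convex hull S'"
    using face_of_convex_hull_subset[OF finite_imp_compact[OF S_finite]] facet_facts(5)[OF fF] P_def' by metis
  obtain B where B: "B \<subseteq> S'" "\<not> affine_dependent B" "affine hull S' = affine hull B"
    using affine_basis_exists by blast
  have affB: "aff_dim B = int ?n - 1"
    by (metis aff_dim_affine_hull aff_dim_convex_hull B(3) S'(2) facet_facts(1)[OF fF])
  have "of_nat (card B) = aff_dim B + 1" by (rule aff_dim_affine_independent[OF B(2)])
  then have cardB: "card B = ?n" using affB by linarith
  have npos: "?n > 0" by simp
  have finB: "finite B" using cardB npos card_ge_0_finite by metis
  obtain x0 where x0: "x0 \<in> B" using cardB npos by (metis card.empty ex_in_conv less_irrefl)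
  let ?B' = "B - {x0}"
  have cardB': "card ?B' = ?n - 1" using cardB finB x0 by (simp add: card_Diff_singleton)
  obtain e where e: "bij_betw e {0..<?n - 1} ?B'"
    using ex_bij_betw_nat_finite[of ?B'] finB cardB' by (metis finite_Diff)
  define cr where "cr i = (2 / (\<alpha> i \<bullet> \<alpha> i)) *\<^sub>R \<alpha> i" for i
  have crM: "cr i \<in> Md" if "i \<in> {1..?n}" for i using coroot_dual'[OF that] by (simp add: cr_def)
  have BS: "B \<subseteq> rat_span M" using B(1) S'(1) S_rat by blast
  have drat: "cr i \<bullet> (x - x0) \<in> \<rat>" if "x \<in> B" "i \<in> {1..?n}" for x i
  proof -
    have "cr i \<bullet> x \<in> \<rat>" "cr i \<bullet> x0 \<in> \<rat>" using rat_pair BS that x0 crM by blast+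
    then show ?thesis by (simp add: inner_diff_right Rats_diff)
  qed
  define A where "A j i = to_rat (cr (Suc i) \<bullet> (e j - x0))" for j i
  have ejB: "e j \<in> ?B'" if "j < ?n - 1" for j using e that bij_betw_apply by fastforce
  have Aeq: "of_rat (A j i) = cr (Suc i) \<bullet> (e j - x0)" if "j < ?n - 1" "i < ?n" for j i
  proof -
    have "Suc i \<in> {1..?n}" using that by simp
    then show ?thesis unfolding A_def using drat ejB[OF that(1)] to_rat_of by blast
  qed
  obtain v :: "nat \<Rightarrow> rat" where v: "\<exists>i<?n. v i \<noteq> 0" "\<forall>j<?n - 1. (\<Sum>i<?n. A j i * v i) = 0"
    using hom_kernel[of "?n - 1" ?n A] npos by auto
  obtain N :: int where N: "N > 0" "\<forall>i<?n. \<exists>z::int. of_int N * v i = of_int z"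
    using common_denom by blast
  define z where "z i = (SOME z::int. of_int N * v i = of_int z)" for i
  have zi: "of_int N * v i = of_int (z i)" if "i < ?n" for i
    unfolding z_def using N(2) that by (metis (mono_tags, lifting) someI_ex)
  define y where "y = (\<Sum>i<?n. of_int (z i) *\<^sub>R cr (Suc i))"
  have yM: "y \<in> Md" unfolding y_def
    by (intro dual_sum dual_intmult crM) auto
  have yorth: "y \<bullet> (x - x0) = 0" if "x \<in> B" for x
  proof (cases "x = x0")
    case False
    then have "x \<in> ?B'" using that by blast
    then have "x \<in> e ` {0..<?n - 1}" using e unfolding bij_betw_def by blast
    then obtain j where j0: "j \<in> {0..<?n - 1}" "x = e j" by blast
    then have j: "j < ?n - 1" "x = e j" by auto
    have "y \<bullet> (x - x0) = (\<Sum>i<?n. of_int (z i) * (cr (Suc i) \<bullet> (e j - x0)))"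
      unfolding y_def j(2) by (simp add: inner_sum_left)
    also have "\<dots> = (\<Sum>i<?n. of_rat (of_int N * v i * A j i))"
    proof (rule sum.cong)
      fix i assume "i \<in> {..<?n}"
      then have "i < ?n" by simp
      have "(of_int (z i) :: real) = of_rat (of_int (z i))" by simp
      also have "\<dots> = of_rat (of_int N * v i)" using zi[OF \<open>i < ?n\<close>] by simp
      finally show "of_int (z i) * (cr (Suc i) \<bullet> (e j - x0)) = of_rat (of_int N * v i * A j i)"
        using Aeq[OF j(1) \<open>i < ?n\<close>] by (simp add: of_rat_mult)
    qed simp
    also have "\<dots> = of_rat (of_int N * (\<Sum>i<?n. A j i * v i))"
      by (simp add: of_rat_sum[symmetric] sum_distrib_left mult_ac)
    also have "\<dots> = 0" using v(2) j(1) by simp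
    finally show ?thesis .
  qed simp
  have y0: "y \<noteq> 0"
  proof
    assume y0: "y = 0"
    define dd where "dd j = of_int (z (j - 1)) * (2 / (\<alpha> j \<bullet> \<alpha> j))" for j
    have "(\<Sum>j=Suc 0..?n. dd j *\<^sub>R \<alpha> j) = (\<Sum>i<?n. dd (Suc i) *\<^sub>R \<alpha> (Suc i))"
      by (rule sum.atLeast1_atMost_eq)
    also have "\<dots> = y" unfolding y_def cr_def dd_def by simp
    finally have "(\<Sum>j\<in>{1..?n}. dd j *\<^sub>R \<alpha> j) = 0" using y0 by simp
    then have dz: "\<forall>j\<in>{1..?n}. dd j = 0" using alpha_comb_zero by blast
    obtain i where i: "i < ?n" "v i \<noteq> 0" using v(1) by blast
    have "dd (Suc i) = 0" using dz i(1) by simp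
    moreover have "\<alpha> (Suc i) \<noteq> 0" using alpha_nz i(1) by simp
    ultimately have "z i = 0" by (simp add: dd_def)
    then have "of_int N * v i = 0" using zi[OF i(1)] by simp
    then show False using N(1) i(2) by simp
  qed
  let ?T = "(\<lambda>x. x - x0) ` B"
  have "x0 \<in> affine hull B" by (rule hull_inc[OF x0])
  then have "aff_dim B = int (dim ?T)" by (rule aff_dim_eq_dim_subtract)
  then have dimT: "dim ?T = ?n - 1" using affB by linarith
  have "S' \<subseteq> convex hull S'" by (rule hull_subset)
  then have BF: "B \<subseteq> F" unfolding S'(2) using B(1) by (rule subset_trans[rotated])
  have Ta: "?T \<subseteq> {x. a \<bullet> x = 0}"
  proof
    fix t assume "t \<in> ?T"
    then obtain x where x: "x \<in> B" "t = x - x0" by blast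
    have xF: "x \<in> F" "x0 \<in> F" using BF x(1) x0 by blast+
    have "a \<bullet> x = b" "a \<bullet> x0 = b" using xF unfolding ab(2) by simp_all
    then show "t \<in> {x. a \<bullet> x = 0}" using x(2) by (simp add: inner_diff_right)
  qed
  have Ty: "?T \<subseteq> {x. y \<bullet> x = 0}" using yorth by auto
  have "{x. a \<bullet> x = 0} \<subseteq> span ?T" by (rule L_hyp[OF a0 Ta dimT])
  also have "span ?T \<subseteq> {x. y \<bullet> x = 0}" using Ty subspace_hyperplane by (rule span_minimal)
  finally have "y = (y \<bullet> a / (a \<bullet> a)) *\<^sub>R a" by (rule L_par[OF a0])
  then obtain s where s: "y = s *\<^sub>R a" by blast
  have s0: "s \<noteq> 0" using s y0 by auto
  define y' where "y' = of_int (if s > 0 then 1 else -1) *\<^sub>R y"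
  have y'M: "y' \<in> Md" unfolding y'_def using yM by (rule dual_intmult)
  have y'a: "y' = \<bar>s\<bar> *\<^sub>R a" unfolding y'_def s by (cases "s > 0") auto
  have y'0: "y' \<noteq> 0" using y'a s0 a0 by simp
  obtain k w where kw: "k \<ge> 1" "y' = of_nat k *\<^sub>R w" "primitive M w" using prim_exists[OF y'M y'0] by blast
  define c where "c = \<bar>s\<bar> / of_nat k"
  have c0: "c > 0" using s0 kw(1) by (simp add: c_def)
  have wa: "w = c *\<^sub>R a"
  proof -
    have "w = (1 / of_nat k) *\<^sub>R y'" using kw(1,2) by simp
    then show ?thesis unfolding y'a c_def by simp
  qed
  have "isnormal M P F w" unfolding isnormal_def
  proof (intro conjI exI[of _ "c * b"])
    show "primitive M w" by (rule kw(3))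
    show "\<forall>x\<in>P. w \<bullet> x \<le> c * b"
    proof
      fix x assume "x \<in> P"
      then have "a \<bullet> x \<le> b" using ab(1) by blast
      then show "w \<bullet> x \<le> c * b" unfolding wa using c0 by (simp add: mult_left_mono)
    qed
    show "F = {x \<in> P. w \<bullet> x = c * b}" unfolding ab(2) wa using c0 by auto
  qed
  then show ?thesis by blast
qed

lemma facet_normal_prop:
  assumes "F facet_of P"
  shows "isnormal M P F (facet_normal M P F)"
proof -
  have "\<exists>!y. isnormal M P F y" using norm_exists[OF assms] norm_unique[OF assms] by blast
  then show ?thesis unfolding facet_normal_alt by (rule theI')
qed

lemma facet_normal_dual:
  assumes "F facet_of P" shows "facet_normal M P F \<in> Md"
  using facet_normal_prop[OF assms] by (simp add: isnormal_def primitive_def)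

lemma transport:
  assumes "g \<in> W" "isnormal M P G y"
  shows "isnormal M P (g ` G) (g y)"
proof -
  obtain h where h: "h \<in> W" "h \<circ> g = id" "g \<circ> h = id" using W_inv[OF assms(1)] by blast
  have hg: "h (g x) = x" for x using h(2) by (metis comp_apply id_apply)
  have gh: "g (h x) = x" for x using h(3) by (metis comp_apply id_apply)
  have lh: "linear h" by (rule W_linear[OF h(1)])
  obtain b where b: "\<forall>x\<in>P. y \<bullet> x \<le> b" "G = {x\<in>P. y \<bullet> x = b}" and p: "primitive M y"
    using assms(2) by (auto simp: isnormal_def)
  have yM: "y \<in> Md" "y \<noteq> 0" using p by (auto simp: primitive_def)
  have hP: "h x \<in> P" if "x \<in> P" for x using W_P[OF h(1)] that by blast
  have gP: "g x \<in> P" if "x \<in> P" for x using W_P[OF assms(1)] that by blast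
  have gin: "g u \<bullet> g v = u \<bullet> v" for u v by (rule W_inner[OF assms(1)])
  have "primitive M (g y)" unfolding primitive_def
  proof (intro conjI allI ballI impI)
    show "g y \<in> Md" by (rule W_dual[OF assms(1) yM(1)])
    show "g y \<noteq> 0"
    proof
      assume "g y = 0"
      then have "h (g y) = 0" using linear_0[OF lh] by simp
      then show False using hg yM(2) by simp
    qed
  next
    fix k :: nat and z assume z: "z \<in> Md" "g y = of_nat k *\<^sub>R z"
    have "y = h (of_nat k *\<^sub>R z)" using z(2) hg by metis
    also have "\<dots> = of_nat k *\<^sub>R h z" using linear_scale[OF lh] by simp
    finally show "k = 1" using p W_dual[OF h(1) z(1)] by (auto simp: primitive_def)
  qed
  moreover have "\<forall>x\<in>P. g y \<bullet> x \<le> b"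
  proof
    fix x assume "x \<in> P"
    have "g y \<bullet> x = g y \<bullet> g (h x)" using gh by simp
    also have "\<dots> = y \<bullet> h x" by (rule gin)
    finally show "g y \<bullet> x \<le> b" using b(1) hP[OF \<open>x \<in> P\<close>] by simp
  qed
  moreover have "g ` G = {x\<in>P. g y \<bullet> x = b}"
  proof
    show "g ` G \<subseteq> {x\<in>P. g y \<bullet> x = b}" using b(2) gP gin by auto
    show "{x\<in>P. g y \<bullet> x = b} \<subseteq> g ` G"
    proof
      fix x assume x: "x \<in> {x\<in>P. g y \<bullet> x = b}"
      have "y \<bullet> h x = g y \<bullet> g (h x)" using gin by simp
      also have "\<dots> = b" using x gh by simp
      finally have "h x \<in> G" using b(2) hP x by simp
      then show "x \<in> g ` G" using gh by (metis image_eqI)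
    qed
  qed
  ultimately show ?thesis unfolding isnormal_def by blast
qed

lemma facet_normal_W:
  assumes "g \<in> W" "F facet_of P"
  shows "facet_normal M P (g ` F) = g (facet_normal M P F)"
  unfolding facet_normal_alt[of M P "g ` F"]
proof (rule the_equality)
  show "isnormal M P (g ` F) (g (facet_normal M P F))" by (rule transport[OF assms(1) facet_normal_prop[OF assms(2)]])
next
  fix y' assume y': "isnormal M P (g ` F) y'"
  obtain h where h: "h \<in> W" "h \<circ> g = id" "g \<circ> h = id" using W_inv[OF assms(1)] by blast
  have "h ` g ` F = F" using h(2) by (simp add: image_comp)
  then have "isnormal M P F (h y')" using transport[OF h(1) y'] by simp
  then have "h y' = facet_normal M P F" using norm_unique[OF assms(2)] facet_normal_prop[OF assms(2)] by blast
  then show "y' = g (facet_normal M P F)" using h(3) by (metis comp_apply id_apply)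
qed

end

context WS begin

abbreviation "FK \<equiv> facets_K P \<alpha> K"
abbreviation "CS F \<equiv> left_cosets WK (stabilizer WK F)"

lemma WK_comp: "g \<in> WK \<Longrightarrow> h \<in> WK \<Longrightarrow> g \<circ> h \<in> WK"
  unfolding parabolic_def by (rule gen_group_comp)

lemma WK_id: "id \<in> WK" unfolding parabolic_def by (rule gen_group.gen_id)

lemma WK_finite: "finite WK" using WK_sub W_finite finite_subset by blast

lemma FK_finite: "finite FK"
  by (rule finite_subset[OF _ facets_finite]) (auto simp: facets_K_def)

lemma FK_facet: "F \<in> FK \<Longrightarrow> F facet_of P" by (simp add: facets_K_def)

lemma CS_finite: "finite (CS F)"
proof -
  have "CS F = (\<lambda>s. (\<lambda>h. s \<circ> h) ` stabilizer WK F) ` WK" unfolding left_cosets_def by blast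
  then show ?thesis using WK_finite by simp
qed

lemma rep_WK: assumes "\<sigma> \<in> CS F" shows "rep \<sigma> \<in> WK"
proof -
  obtain s where s: "s \<in> WK" "\<sigma> = (\<lambda>h. s \<circ> h) ` stabilizer WK F" using assms unfolding left_cosets_def by blast
  have "id \<in> stabilizer WK F" using WK_id by (simp add: stabilizer_def)
  then have "s \<circ> id \<in> \<sigma>" using s(2) by blast
  then have "rep \<sigma> \<in> \<sigma>" unfolding rep_def using someI[of "\<lambda>x. x \<in> \<sigma>"] by blast
  then obtain h where h: "h \<in> stabilizer WK F" "rep \<sigma> = s \<circ> h" using s(2) by blast
  have "h \<in> WK" using h(1) by (simp add: stabilizer_def)
  then show ?thesis using h(2) WK_comp[OF s(1)] by simp
qed

lemma index_Sigma: "index_set P \<alpha> K = Sigma FK CS"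
  by (auto simp: index_set_def)

lemma wall_dual: "k \<in> K \<Longrightarrow> wall_normal M \<alpha> k \<in> Md"
  using wall_props Ksub by (auto simp: primitive_def)

lemma int_rat: "u \<in> M \<Longrightarrow> y \<in> Md \<Longrightarrow> u \<bullet> y \<in> \<rat>"
  using Ints_subset_Rats by (auto simp: dual_lattice_def inner_commute)

lemma coef_eq:
  assumes u: "u \<in> M" and F: "F \<in> FK" and \<sigma>: "\<sigma> \<in> CS F"
  shows "to_rat (u \<bullet> facet_normal M P F) + (\<Sum>k\<in>K. to_rat (u \<bullet> wall_normal M \<alpha> k) * C_coef M P \<alpha> K F \<sigma> k)
       = to_rat (u \<bullet> facet_normal M P (rep \<sigma> ` F))"
proof -
  let ?l = "facet_normal M P F"
  have fF: "F facet_of P" using FK_facet[OF F] .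
  have rW: "rep \<sigma> \<in> WK" using rep_WK[OF \<sigma>] .
  have lM: "?l \<in> Md" using facet_normal_dual[OF fF] .
  have C: "rep \<sigma> ?l - ?l = (\<Sum>j\<in>K. of_rat (C_coef M P \<alpha> K F \<sigma> j) *\<^sub>R wall_normal M \<alpha> j)"
    using C_coef_prop[OF rW lM] by blast
  have l': "facet_normal M P (rep \<sigma> ` F) = rep \<sigma> ?l"
    using facet_normal_W[OF _ fF] rW WK_sub by blast
  have e1: "of_rat (to_rat (u \<bullet> ?l)) = u \<bullet> ?l" using to_rat_of int_rat[OF u lM] by blast
  have e2: "of_rat (to_rat (u \<bullet> wall_normal M \<alpha> k)) = u \<bullet> wall_normal M \<alpha> k" if "k \<in> K" for k
    using to_rat_of int_rat[OF u wall_dual[OF that]] by blast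
  have "u \<bullet> rep \<sigma> ?l = u \<bullet> ?l + u \<bullet> (rep \<sigma> ?l - ?l)" by (simp add: inner_diff_right)
  also have "\<dots> = u \<bullet> ?l + (\<Sum>k\<in>K. of_rat (C_coef M P \<alpha> K F \<sigma> k) * (u \<bullet> wall_normal M \<alpha> k))"
    unfolding C by (simp add: inner_sum_right)
  also have "\<dots> = of_rat (to_rat (u \<bullet> ?l) + (\<Sum>k\<in>K. to_rat (u \<bullet> wall_normal M \<alpha> k) * C_coef M P \<alpha> K F \<sigma> k))"
    unfolding of_rat_add of_rat_sum e1
    by (intro arg_cong2[where f="(+)"] refl sum.cong) (simp_all add: of_rat_mult e2 mult.commute)
  finally show ?thesis unfolding l' by simp
qed

lemma gen_image:
  assumes u: "u \<in> M"
  shows "subst_hom (Phi_img M P \<alpha> K)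
     ((\<Sum>F\<in>FK. Const (to_rat (u \<bullet> facet_normal M P F)) * Var (Inl F))
        + (\<Sum>k\<in>K. Const (to_rat (u \<bullet> wall_normal M \<alpha> k)) * Var (Inr k)))
   = (\<Sum>(F, \<sigma>)\<in>index_set P \<alpha> K. Const (to_rat (u \<bullet> facet_normal M P (rep \<sigma> ` F))) * Var (F, \<sigma>))"
proof -
  let ?a = "\<lambda>F. to_rat (u \<bullet> facet_normal M P F)"
  let ?b = "\<lambda>k. to_rat (u \<bullet> wall_normal M \<alpha> k)"
  let ?C = "\<lambda>G \<sigma> k. C_coef M P \<alpha> K G \<sigma> k"
  let ?I = "Sigma FK CS"
  have fin: "finite ?I" using FK_finite CS_finite by blast
  have "subst_hom (Phi_img M P \<alpha> K)
     ((\<Sum>F\<in>FK. Const (?a F) * Var (Inl F)) + (\<Sum>k\<in>K. Const (?b k) * Var (Inr k)))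
     = (\<Sum>F\<in>FK. Const (?a F) * Phi_img M P \<alpha> K (Inl F)) + (\<Sum>k\<in>K. Const (?b k) * Phi_img M P \<alpha> K (Inr k))"
    by (simp add: subst_add subst_sum subst_mult subst_Const subst_Var)
  also have "(\<Sum>F\<in>FK. Const (?a F) * Phi_img M P \<alpha> K (Inl F)) = (\<Sum>F\<in>FK. \<Sum>\<sigma>\<in>CS F. Const (?a F) * Var (F, \<sigma>))"
    by (rule sum.cong) (simp_all add: Phi_img_def sum_distrib_left)
  also have "\<dots> = (\<Sum>(F, \<sigma>)\<in>?I. Const (?a F) * Var (F, \<sigma>))"
    by (rule sum.Sigma[OF FK_finite]) (simp add: CS_finite)
  also have "(\<Sum>k\<in>K. Const (?b k) * Phi_img M P \<alpha> K (Inr k))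
     = (\<Sum>k\<in>K. \<Sum>(G, \<sigma>)\<in>?I. Const (?b k * ?C G \<sigma> k) * Var (G, \<sigma>))"
    by (rule sum.cong) (simp_all add: Phi_img_def index_Sigma sum_distrib_left case_prod_unfold Const_mult mult.assoc)
  also have "\<dots> = (\<Sum>(G, \<sigma>)\<in>?I. \<Sum>k\<in>K. Const (?b k * ?C G \<sigma> k) * Var (G, \<sigma>))"
    unfolding case_prod_unfold by (rule sum.swap)
  also have "\<dots> = (\<Sum>(G, \<sigma>)\<in>?I. Const (\<Sum>k\<in>K. ?b k * ?C G \<sigma> k) * Var (G, \<sigma>))"
    by (rule sum.cong) (simp_all add: case_prod_unfold Const_sum sum_distrib_right)
  also have "(\<Sum>(F, \<sigma>)\<in>?I. Const (?a F) * Var (F, \<sigma>)) + (\<Sum>(G, \<sigma>)\<in>?I. Const (\<Sum>k\<in>K. ?b k * ?C G \<sigma> k) * Var (G, \<sigma>))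
     = (\<Sum>(F, \<sigma>)\<in>?I. Const (?a F + (\<Sum>k\<in>K. ?b k * ?C F \<sigma> k)) * Var (F, \<sigma>))"
    by (simp add: sum.distrib[symmetric] case_prod_unfold Const_add distrib_right)
  also have "\<dots> = (\<Sum>(F, \<sigma>)\<in>?I. Const (to_rat (u \<bullet> facet_normal M P (rep \<sigma> ` F))) * Var (F, \<sigma>))"
    by (rule sum.cong) (auto simp: coef_eq[OF u])
  finally show ?thesis unfolding index_Sigma .
qed

end

lemma subst_ideal:
  assumes "\<And>g. g \<in> G \<Longrightarrow> subst_hom f g \<in> H" and pG: "p \<in> ideal_gen G"
  shows "subst_hom f p \<in> ideal_gen H"
proof -
  obtain n :: nat and r g where p: "p = (\<Sum>i<n. r i * g i)" "\<forall>i<n. g i \<in> G" using pG unfolding ideal_gen_def mem_Collect_eq by auto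
  have "subst_hom f p = (\<Sum>i<n. subst_hom f (r i) * subst_hom f (g i))"
    unfolding p(1) by (simp add: subst_sum subst_mult)
  moreover have "\<forall>i<n. subst_hom f (g i) \<in> H" using p(2) assms by blast
  ultimately show ?thesis unfolding ideal_gen_def mem_Collect_eq
    by (intro exI[of _ n] exI[of _ "\<lambda>i. subst_hom f (r i)"] exI[of _ "\<lambda>i. subst_hom f (g i)"]) auto
qed

theorem lemma4p3:
  fixes R :: "'a::euclidean_space set" and \<alpha> :: "nat \<Rightarrow> 'a"
    and M \<Lambda> :: "'a set" and K :: "nat set"
  assumes "reduced_crystallographic_root_system R"
    and "simple_system R \<alpha>"
    and "lattice_between R M"
    and "finite \<Lambda>"
    and "\<Lambda> \<subseteq> chamber \<alpha> {1..DIM('a)} \<inter> rat_span M"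
    and "aff_dim (polytope_of R \<Lambda>) = int DIM('a)"
    and "simple_polytope (polytope_of R \<Lambda>)"
    and "nondegenerate \<alpha> (polytope_of R \<Lambda>)"
    and "K \<subseteq> {1..DIM('a)}"
  shows "ideal_gen (J_K_gens M (polytope_of R \<Lambda>) \<alpha> K)
           \<subseteq> {p. subst_hom (Phi_img M (polytope_of R \<Lambda>) \<alpha> K) p
                  \<in> ideal_gen (I_P_gens (polytope_of R \<Lambda>) \<alpha> K \<union> J_P_gens M (polytope_of R \<Lambda>) \<alpha> K)}"
proof -
  interpret WS R \<alpha> M \<Lambda> K using assms(1-6,9) by (rule WS.intro)
  show ?thesis
  proof
    fix p assume p: "p \<in> ideal_gen (J_K_gens M (polytope_of R \<Lambda>) \<alpha> K)"
    have "subst_hom (Phi_img M (polytope_of R \<Lambda>) \<alpha> K) p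
        \<in> ideal_gen (I_P_gens (polytope_of R \<Lambda>) \<alpha> K \<union> J_P_gens M (polytope_of R \<Lambda>) \<alpha> K)"
    proof (rule subst_ideal[OF _ p])
      fix g assume "g \<in> J_K_gens M (polytope_of R \<Lambda>) \<alpha> K"
      then obtain u where u: "u \<in> M"
        "g = (\<Sum>F\<in>facets_K (polytope_of R \<Lambda>) \<alpha> K. Const (to_rat (u \<bullet> facet_normal M (polytope_of R \<Lambda>) F)) * Var (Inl F))
           + (\<Sum>k\<in>K. Const (to_rat (u \<bullet> wall_normal M \<alpha> k)) * Var (Inr k))"
        unfolding J_K_gens_def by blast
      have "subst_hom (Phi_img M (polytope_of R \<Lambda>) \<alpha> K) g \<in> J_P_gens M (polytope_of R \<Lambda>) \<alpha> K"
        unfolding u(2) gen_image[OF u(1)] J_P_gens_def using u(1) by blast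
      then show "subst_hom (Phi_img M (polytope_of R \<Lambda>) \<alpha> K) g
          \<in> I_P_gens (polytope_of R \<Lambda>) \<alpha> K \<union> J_P_gens M (polytope_of R \<Lambda>) \<alpha> K" by blast
    qed
    then show "p \<in> {p. subst_hom (Phi_img M (polytope_of R \<Lambda>) \<alpha> K) p
        \<in> ideal_gen (I_P_gens (polytope_of R \<Lambda>) \<alpha> K \<union> J_P_gens M (polytope_of R \<Lambda>) \<alpha> K)}" by simp
  qed
qed

end
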